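(* Let $g$ be a positive integer; suppose that for some $l$ the set $S_l$ contains a consecutive prospective prime pair with gap $g$, and let $j>l+2$. Let $(a,a+g)$ be a consecutive prospective prime pair with gap $g$ in $S_j$. Then for every $0\le m\le P_{j+2}-1$, the number of integers $m_{j+1}\in\{0,\dots,P_{j+1}-1\}$ such that, with $M=m_{j+1}P_j\#+mP_{j+1}\#$, both $a+M$ and $a+g+M$ are coprime to $P_{j+2}\#$ (i.e. the number of pairs generated from $(a,a+g)$ that lie in the subset $S_{j+2}^{(m)}$) is at least $P_{j+1}-4$.
   Context: $P_k$ denotes the $k$-th prime ($P_1=2$), $P_k\#=\prod_{i=1}^kP_i$. $S_k=\{N\in\mathbb{N}:5\le N\le4+P_k\#\}$ and $S_k^{(m)}=\{N:5+mP_{k-1}\#\le N\le 4+(m+1)P_{k-1}\#\}$ for $0\le m\le P_k-1$. A prospective prime in $S_k$ is an $N\in S_k$ coprime to $P_k\#$; prospective primes $a<b$ in $S_k$ are consecutive if no integer strictly between them is coprime to $P_k\#$; a consecutive prospective prime pair with gap $g$ is a pair $(a,a+g)$ of consecutive prospective primes. *)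

theory Defs
  imports "HOL-Computational_Algebra.Primes" "HOL-Library.Infinite_Set"
begin

text \<open>P k = k-th prime, 1-indexed (P 1 = 2).\<close>
definition P :: "nat \<Rightarrow> nat" where
  "P k = enumerate {p::nat. prime p} (k - 1)"

definition primorial :: "nat \<Rightarrow> nat" where
  "primorial k = (\<Prod>i\<in>{1..k}. P i)"

definition S :: "nat \<Rightarrow> nat set" where
  "S k = {N. 5 \<le> N \<and> N \<le> 4 + primorial k}"

definition S_sub :: "nat \<Rightarrow> nat \<Rightarrow> nat set" where
  "S_sub k m = {N. 5 + m * primorial (k - 1) \<le> N \<and> N \<le> 4 + (m + 1) * primorial (k - 1)}"

definition prospective :: "nat \<Rightarrow> nat \<Rightarrow> bool" where
  "prospective k N \<longleftrightarrow> N \<in> S k \<and> coprime N (primorial k)"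

definition consecutive :: "nat \<Rightarrow> nat \<Rightarrow> nat \<Rightarrow> bool" where
  "consecutive k a b \<longleftrightarrow> prospective k a \<and> prospective k b \<and> a < b \<and>
     (\<forall>n. a < n \<and> n < b \<longrightarrow> \<not> coprime n (primorial k))"

definition cpp_pair :: "nat \<Rightarrow> nat \<Rightarrow> nat \<Rightarrow> bool" where
  "cpp_pair k g a \<longleftrightarrow> consecutive k a (a + g)"

end

theory Submission
  imports Defs
begin

lemma P_prime: "prime (P k)"
  unfolding P_def using enumerate_in_set[OF primes_infinite] by blast

lemma P_mono: "1 \<le> i \<Longrightarrow> i < k \<Longrightarrow> P i < P k"
  unfolding P_def by (intro enumerate_mono[OF _ primes_infinite]) auto

lemma primorial_Suc: "primorial (Suc k) = primorial k * P (Suc k)"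
  unfolding primorial_def by (simp add: prod.cl_ivl_Suc)

lemma coprime_primorial_P: "j < k \<Longrightarrow> coprime (primorial j) (P k)"
  unfolding primorial_def
proof (intro prod_coprime_left)
  fix i assume "j < k" "i \<in> {1..j}"
  then have "P i < P k" by (intro P_mono) auto
  then show "coprime (P i) (P k)" by (intro primes_coprime P_prime) auto
qed

lemma coprime_shift: "coprime (a::nat) c \<Longrightarrow> coprime (a + k * c) c"
  by (metis coprime_commute coprime_iff_gcd_eq_1 gcd_add_mult mult.commute add.commute)

lemma card_dvd_le1:
  fixes r c b n :: nat
  assumes "prime r" "coprime c r" "n \<le> r"
  shows "card {x\<in>{0..<n}. r dvd (b + x*c)} \<le> 1"
proof -
  have "x = y" if x: "x < n" "r dvd (b + x*c)" and y: "y < n" "r dvd (b + y*c)" "x \<le> y" for x y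
  proof -
    have "r dvd (b + y*c) - (b + x*c)" using x y by (intro dvd_diff_nat) auto
    also have "(b + y*c) - (b + x*c) = (y - x) * c" by (simp add: diff_mult_distrib)
    finally have "r dvd (y - x) * c" .
    moreover have "\<not> r dvd c" using assms
      by (metis coprime_commute not_prime_unit prime_nat_iff coprime_absorb_left)
    ultimately have "r dvd (y - x)" using assms(1) prime_dvd_mult_iff by blast
    moreover have "y - x < r" using x y assms by linarith
    ultimately have "y - x = 0" using dvd_imp_le by (cases "y - x = 0") auto
    then show "x = y" using y(3) by simp
  qed
  then have "\<forall>a1\<in>{x\<in>{0..<n}. r dvd (b + x*c)}. \<forall>a2\<in>{x\<in>{0..<n}. r dvd (b + x*c)}. a1 = a2"
    by (metis (no_types, lifting) mem_Collect_eq atLeastLessThan_iff nat_le_linear)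
  then show ?thesis using card_le_Suc0_iff_eq[of "{x\<in>{0..<n}. r dvd (b + x*c)}"] by simp
qed

theorem lemma5:
  fixes g l j a :: nat
  assumes "g > 0"
    and "\<exists>b. cpp_pair l g b"
    and "j > l + 2"
    and "cpp_pair j g a"
  shows "\<forall>m \<le> P (j + 2) - 1.
           card {mj1 \<in> {0..<P (j + 1)}.
                   coprime (a + mj1 * primorial j + m * primorial (j + 1)) (primorial (j + 2)) \<and>
                   coprime (a + g + mj1 * primorial j + m * primorial (j + 1)) (primorial (j + 2))}
           \<ge> P (j + 1) - 4"
proof (intro allI impI)
  fix m
  define p where "p = P (j + 1)"
  define q where "q = P (j + 2)"
  define c where "c = primorial j"
  have pp: "prime p" "prime q" unfolding p_def q_def by (rule P_prime)+
  have pq: "p < q" unfolding p_def q_def by (intro P_mono) auto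
  have cp: "coprime c p" "coprime c q" unfolding c_def p_def q_def
    by (intro coprime_primorial_P; simp)+
  have prim1: "primorial (j+1) = c * p" unfolding c_def p_def using primorial_Suc by simp
  have prim2: "primorial (j+2) = c * p * q" unfolding c_def p_def q_def
    using primorial_Suc[of "j+1"] primorial_Suc[of j] by simp
  have ca: "coprime a c" "coprime (a+g) c"
    using assms(4) unfolding cpp_pair_def consecutive_def prospective_def c_def by auto
  define A where "A = {mj1 \<in> {0..<p}.
                   coprime (a + mj1 * c + m * (c*p)) (c*p*q) \<and>
                   coprime (a + g + mj1 * c + m * (c*p)) (c*p*q)}"
  define B where "B = (\<lambda>r b. {x\<in>{0..<p}. r dvd (b + x*c)})"
  have Bc: "card (B r b) \<le> 1" if "r = p \<or> r = q" for r b
    unfolding B_def using that pp cp pq card_dvd_le1 by (metis less_imp_le order_refl)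
  have sub: "{0..<p} - A \<subseteq> B p (a + m*(c*p)) \<union> B p (a + g + m*(c*p)) \<union>
        B q (a + m*(c*p)) \<union> B q (a + g + m*(c*p))"
  proof
    fix x assume x: "x \<in> {0..<p} - A"
    have e1: "a + x * c + m * (c*p) = a + (x + m*p) * c" by (simp add: algebra_simps)
    have e2: "a + g + x * c + m * (c*p) = (a + g) + (x + m*p) * c" by (simp add: algebra_simps)
    have "coprime (a + x * c + m * (c*p)) c" "coprime (a + g + x * c + m * (c*p)) c"
      unfolding e1 e2 using ca by (auto intro: coprime_shift)
    moreover have "coprime n r \<longleftrightarrow> \<not> r dvd n" if "prime r" for n r :: nat
      using that by (metis coprime_commute prime_imp_coprime coprime_absorb_left not_prime_unit
          coprime_common_divisor dvd_refl)
    ultimately show "x \<in> B p (a + m*(c*p)) \<union> B p (a + g + m*(c*p)) \<union>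
        B q (a + m*(c*p)) \<union> B q (a + g + m*(c*p))"
      using x pp unfolding A_def B_def by (auto simp: algebra_simps)
  qed
  have fin: "finite (B r b)" for r b unfolding B_def by auto
  have "card ({0..<p} - A) \<le> 4"
  proof -
    have "card ({0..<p} - A) \<le> card (B p (a + m*(c*p)) \<union> B p (a + g + m*(c*p)) \<union>
        B q (a + m*(c*p)) \<union> B q (a + g + m*(c*p)))"
      using sub fin by (intro card_mono) auto
    also have "\<dots> \<le> 4"
    proof -
      let ?X = "B p (a + m*(c*p))" and ?Y = "B p (a + g + m*(c*p))"
        and ?Z = "B q (a + m*(c*p))" and ?W = "B q (a + g + m*(c*p))"
      have "card (?X \<union> ?Y \<union> ?Z \<union> ?W) \<le> card (?X \<union> ?Y \<union> ?Z) + card ?W" by (rule card_Un_le)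
      also have "\<dots> \<le> card (?X \<union> ?Y) + card ?Z + card ?W" using card_Un_le[of "?X \<union> ?Y" ?Z] by linarith
      also have "\<dots> \<le> card ?X + card ?Y + card ?Z + card ?W" using card_Un_le[of ?X ?Y] by linarith
      also have "\<dots> \<le> 4" using Bc[of p "a + m*(c*p)"] Bc[of p "a + g + m*(c*p)"] Bc[of q "a + m*(c*p)"] Bc[of q "a + g + m*(c*p)"] by simp
      finally show ?thesis .
    qed
    finally show ?thesis .
  qed
  moreover have "A \<subseteq> {0..<p}" unfolding A_def by auto
  ultimately have "card A \<ge> p - 4"
    using card_Diff_subset[of A "{0..<p}"] by (auto simp: finite_subset)
  then show "card {mj1 \<in> {0..<P (j + 1)}.
                   coprime (a + mj1 * primorial j + m * primorial (j + 1)) (primorial (j + 2)) \<and>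
                   coprime (a + g + mj1 * primorial j + m * primorial (j + 1)) (primorial (j + 2))}
           \<ge> P (j + 1) - 4"
    unfolding A_def p_def q_def c_def prim1[unfolded c_def p_def] prim2[unfolded c_def p_def q_def] .
qed

end
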